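(* Let $f\in\mathbf{SB}_n$ with $\deg(f)>1$ and $\deg(f)$ not a power of $2$. Then $\mathcal{FAI}(f)\le \deg(f)-1$.
   Context: $\mathbf{SB}_n$ is the set of symmetric Boolean functions on $n$ variables; $\deg$ is the algebraic degree. The algebraic immunity of $f\in\mathbf{B}_n$ is $\mathcal{AI}(f)=\min\{\deg(g): g\neq0,\ gf=0 \text{ or } g(f+1)=0\}$. The fast algebraic immunity is $\mathcal{FAI}(f)=\min\big(\{2\mathcal{AI}(f)\}\cup\{\deg(g)+\deg(gf): g\in\mathbf{B}_n,\ 1\le\deg(g)<\mathcal{AI}(f)\}\big)$. *)

theory Defs
  imports Main
begin

text \<open>A Boolean function on n variables is modelled as f :: nat set => bool,
  where an input vector x in F_2^n is identified with its support
  {i. x_i = 1}, a subset of {..<n}.  Only the values on subsets of {..<n}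
  matter; all notions below are relativised to Pow {..<n}.\<close>

definition is_zero_on :: "nat \<Rightarrow> (nat set \<Rightarrow> bool) \<Rightarrow> bool" where
  "is_zero_on n g \<longleftrightarrow> (\<forall>S. S \<subseteq> {..<n} \<longrightarrow> \<not> g S)"

definition anf_coeff :: "(nat set \<Rightarrow> bool) \<Rightarrow> nat set \<Rightarrow> bool" where
  "anf_coeff f T \<longleftrightarrow> odd (card {S. S \<subseteq> T \<and> f S})"

text \<open>Algebraic degree: maximal size of a monomial with nonzero ANF coefficient
  (degree of the zero function taken to be 0).\<close>
definition alg_deg :: "nat \<Rightarrow> (nat set \<Rightarrow> bool) \<Rightarrow> nat" where
  "alg_deg n f = Max ({card T | T. T \<subseteq> {..<n} \<and> anf_coeff f T} \<union> {0})"

definition symmetric_bf :: "nat \<Rightarrow> (nat set \<Rightarrow> bool) \<Rightarrow> bool" where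
  "symmetric_bf n f \<longleftrightarrow>
     (\<forall>S T. S \<subseteq> {..<n} \<longrightarrow> T \<subseteq> {..<n} \<longrightarrow> card S = card T \<longrightarrow> f S = f T)"

definition bf_mult :: "(nat set \<Rightarrow> bool) \<Rightarrow> (nat set \<Rightarrow> bool) \<Rightarrow> (nat set \<Rightarrow> bool)" where
  "bf_mult g f = (\<lambda>S. g S \<and> f S)"

definition bf_compl :: "(nat set \<Rightarrow> bool) \<Rightarrow> (nat set \<Rightarrow> bool)" where
  "bf_compl f = (\<lambda>S. \<not> f S)"

definition alg_immunity :: "nat \<Rightarrow> (nat set \<Rightarrow> bool) \<Rightarrow> nat" where
  "alg_immunity n f = (LEAST d. \<exists>g. \<not> is_zero_on n g \<and>
       (is_zero_on n (bf_mult g f) \<or> is_zero_on n (bf_mult g (bf_compl f))) \<and>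
       alg_deg n g = d)"

definition fast_alg_immunity :: "nat \<Rightarrow> (nat set \<Rightarrow> bool) \<Rightarrow> nat" where
  "fast_alg_immunity n f = (LEAST d. d = 2 * alg_immunity n f \<or>
       (\<exists>g. 1 \<le> alg_deg n g \<and> alg_deg n g < alg_immunity n f \<and>
            d = alg_deg n g + alg_deg n (bf_mult g f)))"

end

theory Submission
  imports Defs "HOL-Library.Z2"
begin

declare add_bit_eq_xor[simp del] mult_bit_eq_and[simp del]

definition tr :: "(nat \<Rightarrow> bit) \<Rightarrow> nat \<Rightarrow> bit" where
  "tr c t = (\<Sum>j\<le>t. of_nat (t choose j) * c j)"

lemma bit_add_self[simp]: "(x::bit) + x = 0"
  by (cases x) simp_all

lemma bit_mult_self[simp]: "(x::bit) * x = x"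
  by (cases x) simp_all

lemma of_nat_bit: "(of_nat m :: bit) = (if even m then 0 else 1)"
  by (induction m) auto

lemma tr_ext:
  assumes "t \<le> N"
  shows "tr c t = (\<Sum>j\<le>N. of_nat (t choose j) * c j)"
  unfolding tr_def
  by (rule sum.mono_neutral_left) (use assms in \<open>auto simp: binomial_eq_0\<close>)

lemma tr_Suc: "tr c (Suc t) = tr c t + tr (\<lambda>s. c (Suc s)) t"
proof -
  have "tr c (Suc t) = c 0 + (\<Sum>j\<le>t. of_nat (Suc t choose Suc j) * c (Suc j))"
    unfolding tr_def by (subst sum.atMost_Suc_shift) simp
  also have "\<dots> = c 0 + (\<Sum>j\<le>t. of_nat (t choose Suc j) * c (Suc j))
                  + (\<Sum>j\<le>t. of_nat (t choose j) * c (Suc j))"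
    by (simp add: sum.distrib algebra_simps)
  also have "c 0 + (\<Sum>j\<le>t. of_nat (t choose Suc j) * c (Suc j)) = tr c t"
  proof -
    have "tr c t = (\<Sum>j\<le>Suc t. of_nat (t choose j) * c j)"
      by (rule tr_ext) simp
    also have "\<dots> = c 0 + (\<Sum>j\<le>t. of_nat (t choose Suc j) * c (Suc j))"
      by (subst sum.atMost_Suc_shift) simp
    finally show ?thesis by simp
  qed
  finally show ?thesis by (simp add: tr_def)
qed

lemma tr_add: "tr (\<lambda>s. a s + b s) t = tr a t + tr b t"
  unfolding tr_def by (simp add: sum.distrib algebra_simps)

lemma tr_tr: "tr (tr c) t = c t"
proof (induction t arbitrary: c)
  case 0
  then show ?case by (simp add: tr_def)
next
  case (Suc t)
  have "(\<lambda>s. tr c (Suc s)) = (\<lambda>s. tr c s + tr (\<lambda>s. c (Suc s)) s)"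
    by (simp add: tr_Suc)
  then have "tr (tr c) (Suc t) = tr (tr c) t + (tr (tr c) t + tr (tr (\<lambda>s. c (Suc s))) t)"
    by (simp add: tr_Suc tr_add)
  also have "\<dots> = c (Suc t)" using Suc.IH[of c] Suc.IH[of "\<lambda>s. c (Suc s)"]
    by (simp add: add.assoc[symmetric])
  finally show ?case .
qed

lemma binom_2pow_even:
  assumes "0 < j" "j < 2 ^ K"
  shows "even (2 ^ K choose j)"
proof (rule ccontr)
  assume o: "odd (2 ^ K choose j)"
  obtain i where j: "j = Suc i" using assms(1) by (cases j) auto
  have "j * (2 ^ K choose j) = 2 ^ K * ((2 ^ K - 1) choose i)"
    using binomial_absorption[of i "2^K"] j by simp
  then have "(2::nat) ^ K dvd j * (2 ^ K choose j)" by simp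
  moreover have "coprime ((2::nat) ^ K) (2 ^ K choose j)"
    using o by (simp add: coprime_commute)
  ultimately have "(2::nat) ^ K dvd j"
    using coprime_dvd_mult_left_iff by blast
  then show False using assms by (auto dest: dvd_imp_le)
qed

lemma binom_shift:
  fixes M :: nat
  assumes "M = 2 ^ K"
  shows "(of_nat ((s + M) choose t) :: bit) =
     of_nat (s choose t) + (if M \<le> t then of_nat (s choose (t - M)) else 0)"
proof -
  have "(s + M) choose t = (\<Sum>k\<le>t. (M choose k) * (s choose (t - k)))"
    using vandermonde[of M s t] by (simp add: add.commute)
  then have "(of_nat ((s + M) choose t) :: bit) = (\<Sum>k\<le>t. of_nat (M choose k) * of_nat (s choose (t - k)))"
    by simp
  also have "\<dots> = (\<Sum>k\<in>{k. k \<le> t \<and> (k = 0 \<or> k = M)}. of_nat (M choose k) * of_nat (s choose (t - k)))"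
  proof (rule sum.mono_neutral_right)
    show "\<forall>i\<in>{..t} - {k. k \<le> t \<and> (k = 0 \<or> k = M)}. (of_nat (M choose i) :: bit) * of_nat (s choose (t - i)) = 0"
    proof
      fix i assume i: "i \<in> {..t} - {k. k \<le> t \<and> (k = 0 \<or> k = M)}"
      show "(of_nat (M choose i) :: bit) * of_nat (s choose (t - i)) = 0"
      proof (cases "i < M")
        case True
        then have "even (M choose i)" using binom_2pow_even[of i K] i assms by auto
        then show ?thesis by (simp add: of_nat_bit)
      next
        case False
        then have "M < i" using i by auto
        then show ?thesis by (simp add: binomial_eq_0)
      qed
    qed
  qed auto
  also have "\<dots> = of_nat (s choose t) + (if M \<le> t then of_nat (s choose (t - M)) else 0)"
  proof -
    have M0: "M \<noteq> 0" using assms by simp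
    show ?thesis
    proof (cases "M \<le> t")
      case True
      then have "{k. k \<le> t \<and> (k = 0 \<or> k = M)} = {0, M}" by auto
      then show ?thesis using True M0 by simp
    next
      case False
      then have "{k. k \<le> t \<and> (k = 0 \<or> k = M)} = {0}" by auto
      then show ?thesis using False by simp
    qed
  qed
  finally show ?thesis .
qed

lemma shift_sum:
  fixes s M :: nat
  shows "(\<Sum>t\<le>s + M. (if M \<le> t then h (t - M) else (0::'a::comm_monoid_add))) = (\<Sum>i\<le>s. h i)"
proof (induction s)
  case 0
  have "(\<Sum>t\<le>M. (if M \<le> t then h (t - M) else 0)) = (\<Sum>t<M. (if M \<le> t then h (t - M) else 0)) + h 0"
    by (simp add: lessThan_Suc_atMost[symmetric])
  then show ?case by simp
next
  case (Suc s)
  then show ?case by (simp add: add.commute)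
qed

lemma tr_period:
  fixes M :: nat
  assumes "M = 2 ^ K" "t \<ge> M" "\<And>s. w (s + M) = w s"
  shows "tr w t = 0"
  using assms(2,3)
proof (induction t arbitrary: w rule: dec_induct)
  case base
  have "tr w M = (\<Sum>j\<in>{0, M}. of_nat (M choose j) * w j)"
    unfolding tr_def
  proof (rule sum.mono_neutral_right)
    show "\<forall>i\<in>{..M} - {0, M}. (of_nat (M choose i) :: bit) * w i = 0"
      using binom_2pow_even[of _ K] assms(1) by (auto simp: of_nat_bit)
  qed auto
  also have "\<dots> = w 0 + w M" using assms(1) by simp
  also have "\<dots> = 0" using base[of 0] by simp
  finally show ?case .
next
  case (step t)
  have "tr w (Suc t) = tr w t + tr (\<lambda>s. w (Suc s)) t" by (rule tr_Suc)
  also have "tr w t = 0" using step by blast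
  also have "tr (\<lambda>s. w (Suc s)) t = 0"
  proof -
    have "\<And>s. w (Suc (s + M)) = w (Suc s)" using step.prems[of "Suc s" for s] by simp
    then show ?thesis using step.IH[of "\<lambda>s. w (Suc s)"] by simp
  qed
  finally show ?case by simp
qed


lemma cnt:
  assumes "finite T"
  shows "card {S. S \<subseteq> T \<and> P (card S)} = (\<Sum>j\<le>card T. if P j then card T choose j else 0)"
proof -
  let ?A = "{S. S \<subseteq> T \<and> P (card S)}"
  have fA: "finite ?A" by (rule finite_subset[of _ "Pow T"]) (use assms in auto)
  have im: "card ` ?A \<subseteq> {..card T}" using assms by (auto intro: card_mono)
  have "card ?A = (\<Sum>x\<in>?A. 1::nat)" by simp
  also have "\<dots> = (\<Sum>j\<le>card T. \<Sum>x\<in>{x. x \<in> ?A \<and> card x = j}. 1)"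
    by (rule sum.group[OF fA _ im, symmetric]) simp
  also have "\<dots> = (\<Sum>j\<le>card T. if P j then card T choose j else 0)"
  proof (rule sum.cong[OF refl])
    fix j
    have "{x. x \<in> ?A \<and> card x = j} = (if P j then {B. B \<subseteq> T \<and> card B = j} else {})"
      by auto
    then show "(\<Sum>x\<in>{x. x \<in> ?A \<and> card x = j}. 1::nat) = (if P j then card T choose j else 0)"
      using n_subsets[OF assms, of j] by simp
  qed
  finally show ?thesis .
qed

lemma odd_bit: "odd m \<longleftrightarrow> (of_nat m :: bit) = 1"
  by (simp add: of_nat_bit)

lemma anf_sym:
  assumes "T \<subseteq> {..<n}" "\<And>S. S \<subseteq> {..<n} \<Longrightarrow> h S = P (card S)"
  shows "anf_coeff h T \<longleftrightarrow> tr (\<lambda>j. of_bool (P j)) (card T) = 1"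
proof -
  have fT: "finite T" using assms(1) finite_subset by blast
  have "{S. S \<subseteq> T \<and> h S} = {S. S \<subseteq> T \<and> P (card S)}"
    using assms by auto
  then have "anf_coeff h T \<longleftrightarrow> odd (\<Sum>j\<le>card T. if P j then card T choose j else 0)"
    unfolding anf_coeff_def using cnt[OF fT] by simp
  also have "\<dots> \<longleftrightarrow> (of_nat (\<Sum>j\<le>card T. if P j then card T choose j else 0) :: bit) = 1"
    by (rule odd_bit)
  also have "(of_nat (\<Sum>j\<le>card T. if P j then card T choose j else 0) :: bit)
      = tr (\<lambda>j. of_bool (P j)) (card T)"
    unfolding tr_def by (simp only: of_nat_sum) (rule sum.cong, auto)
  finally show ?thesis .
qed

lemma deg_fin: "finite ({card T |T. T \<subseteq> {..<n} \<and> anf_coeff h T} \<union> {0})"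
proof -
  have "{card T |T. T \<subseteq> {..<n} \<and> anf_coeff h T} \<subseteq> {..n}"
    by (auto dest!: card_mono[OF finite_lessThan])
  then show ?thesis by (auto intro: finite_subset)
qed

lemma deg_le:
  assumes "\<And>T. T \<subseteq> {..<n} \<Longrightarrow> anf_coeff h T \<Longrightarrow> card T \<le> D"
  shows "alg_deg n h \<le> D"
  unfolding alg_deg_def using deg_fin[of n h] assms by (subst Max_le_iff) auto

lemma deg_ge:
  assumes "T \<subseteq> {..<n}" "anf_coeff h T"
  shows "card T \<le> alg_deg n h"
  unfolding alg_deg_def using deg_fin[of n h] assms by (intro Max_ge) auto

lemma deg_attained:
  assumes "0 < alg_deg n h"
  shows "\<exists>T. T \<subseteq> {..<n} \<and> card T = alg_deg n h \<and> anf_coeff h T"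
proof -
  have "alg_deg n h \<in> {card T |T. T \<subseteq> {..<n} \<and> anf_coeff h T} \<union> {0}"
    unfolding alg_deg_def using deg_fin[of n h] by (intro Max_in) auto
  then show ?thesis using assms by auto
qed

lemma bit_lemma: "((a::bit) + 1) * (b + a) = (a + 1) * b"
  by (cases a; cases b) (simp_all add: add_bit_eq_xor mult_bit_eq_and)

lemma of_bool_bit: "of_bool ((x::bit) = 1) = x"
  by (cases x) simp_all


theorem corollary6:
  fixes n :: nat and f :: "nat set \<Rightarrow> bool"
  assumes "symmetric_bf n f"
    and "alg_deg n f > 1"
    and "\<not> (\<exists>k::nat. alg_deg n f = 2 ^ k)"
  shows "fast_alg_immunity n f \<le> alg_deg n f - 1"
proof -
  define d where "d = alg_deg n f"
  have d1: "d > 1" using assms(2) d_def by simp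
  obtain T0 where T0: "T0 \<subseteq> {..<n}" "card T0 = d" "anf_coeff f T0"
    using deg_attained[of n f] d1 d_def by auto
  have dn: "d \<le> n" using T0 card_mono[OF finite_lessThan T0(1)] by simp
  obtain K where K: "2 ^ K \<le> d" "d < 2 ^ (K + 1)"
    using ex_power_ivl1[of 2 d] d1 by auto
  define M :: nat where "M = 2 ^ K"
  have Md: "M < d" using K(1) assms(3) d_def M_def by (metis le_neq_implies_less)
  have dM: "d < 2 * M" using K(2) M_def by simp
  have M0: "0 < M" using M_def by simp
  define r where "r = d - M"
  have r0: "0 < r" and rM: "r < M" using Md dM r_def by auto
  have sym: "\<And>S. S \<subseteq> {..<n} \<Longrightarrow> f S = f {..<card S}"
  proof -
    fix S assume S: "S \<subseteq> {..<n}"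
    have "card S \<le> n" using card_mono[OF finite_lessThan S] by simp
    then show "f S = f {..<card S}"
      using assms(1) S unfolding symmetric_bf_def by (metis card_lessThan lessThan_subset_iff)
  qed
  define vb where "vb j = (of_bool (f {..<j}) :: bit)" for j
  define lam where "lam = tr vb"
  have anf_f: "anf_coeff f T \<longleftrightarrow> lam (card T) = 1" if "T \<subseteq> {..<n}" for T
    unfolding lam_def vb_def by (rule anf_sym[OF that]) (rule sym)
  have lam_hi: "lam t = 0" if "d < t" "t \<le> n" for t
  proof -
    have "\<not> anf_coeff f {..<t}"
      using deg_ge[of "{..<t}" n f] that d_def by auto
    then show ?thesis using anf_f[of "{..<t}"] that by simp
  qed
  have lam_d: "lam d = 1" using anf_f[OF T0(1)] T0 by simp
  define lam' where "lam' t = (if t \<le> d then lam t else 0)" for t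
  define v' where "v' = tr lam'"
  have v'_eq: "v' s = vb s" if "s \<le> n" for s
  proof -
    have "v' s = tr lam s"
      unfolding v'_def tr_def
      by (rule sum.cong[OF refl]) (use that lam_hi in \<open>auto simp: lam'_def\<close>)
    then show ?thesis by (simp add: lam_def tr_tr)
  qed
  define c where "c t = lam' (M + t) + (if t = 0 then 1 else 0)" for t
  define u where "u = tr c"
  define F1 where "F1 = tr (\<lambda>t. lam' (M + t))"
  have delta: "tr (\<lambda>t. if t = 0 then 1 else 0) s = 1" for s
    unfolding tr_def by (simp add: if_distrib[of "\<lambda>x. a * x" for a] cong: if_cong)
  have u_eq: "u s = F1 s + 1" for s
    unfolding u_def F1_def c_def tr_add delta ..
  have c_hi: "c t = 0" if "M \<le> t" for t
    using that dM M0 by (auto simp: c_def lam'_def)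
  have u_per: "u (s + M) = u s" for s
  proof -
    have "u (s + M) = (\<Sum>t\<le>s + M. of_nat (s choose t) * c t)
        + (\<Sum>t\<le>s + M. (if M \<le> t then of_nat (s choose (t - M)) else 0) * c t)"
      unfolding u_def tr_def binom_shift[OF M_def] by (simp add: sum.distrib algebra_simps)
    also have "(\<Sum>t\<le>s + M. (if M \<le> t then of_nat (s choose (t - M)) else 0) * c t) = 0"
      by (rule sum.neutral) (auto simp: c_hi)
    also have "(\<Sum>t\<le>s + M. of_nat (s choose t) * c t) = u s"
      unfolding u_def by (rule tr_ext[symmetric]) simp
    finally show ?thesis by simp
  qed
  have v_per: "v' (s + M) = v' s + F1 s" for s
  proof -
    have "v' (s + M) = (\<Sum>t\<le>s + M. of_nat (s choose t) * lam' t)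
        + (\<Sum>t\<le>s + M. (if M \<le> t then of_nat (s choose (t - M)) else 0) * lam' t)"
      unfolding v'_def tr_def binom_shift[OF M_def] by (simp add: sum.distrib algebra_simps)
    also have "(\<Sum>t\<le>s + M. (if M \<le> t then of_nat (s choose (t - M)) else 0) * lam' t)
       = (\<Sum>t\<le>s + M. (if M \<le> t then (\<lambda>i. of_nat (s choose i) * lam' (M + i)) (t - M) else 0))"
      by (rule sum.cong[OF refl]) auto
    also have "\<dots> = F1 s" unfolding F1_def tr_def by (rule shift_sum)
    also have "(\<Sum>t\<le>s + M. of_nat (s choose t) * lam' t) = v' s"
      unfolding v'_def by (rule tr_ext[symmetric]) simp
    finally show ?thesis .
  qed
  define w where "w s = u s * v' s" for s
  have w_per: "w (s + M) = w s" for s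
    unfolding w_def u_per v_per unfolding u_eq by (rule bit_lemma)
  define g where "g S = (u (card S) = 1)" for S :: "nat set"
  have anf_g: "anf_coeff g T \<longleftrightarrow> c (card T) = 1" if "T \<subseteq> {..<n}" for T
  proof -
    have "anf_coeff g T \<longleftrightarrow> tr (\<lambda>j. of_bool (u j = 1)) (card T) = 1"
      by (rule anf_sym[OF that]) (simp add: g_def)
    then show ?thesis by (simp add: of_bool_bit u_def tr_tr)
  qed
  have deg_g_le: "alg_deg n g \<le> r"
  proof (rule deg_le)
    fix T assume T: "T \<subseteq> {..<n}" "anf_coeff g T"
    show "card T \<le> r"
    proof (rule ccontr)
      assume "\<not> card T \<le> r"
      then have "c (card T) = 0" using r0 r_def Md by (auto simp: c_def lam'_def)
      then show False using anf_g[OF T(1)] T(2) by simp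
    qed
  qed
  have deg_g_ge: "r \<le> alg_deg n g"
  proof -
    have sub: "{..<r} \<subseteq> {..<n}" using r_def dn by auto
    have "c r = 1" using r0 r_def Md lam_d by (simp add: c_def lam'_def)
    then have "anf_coeff g {..<r}" using anf_g[OF sub] by simp
    then show ?thesis using deg_ge[OF sub] by simp
  qed
  have deg_gf: "alg_deg n (bf_mult g f) \<le> M - 1"
  proof (rule deg_le)
    fix T assume T: "T \<subseteq> {..<n}" "anf_coeff (bf_mult g f) T"
    show "card T \<le> M - 1"
    proof (rule ccontr)
      assume "\<not> card T \<le> M - 1"
      then have TM: "M \<le> card T" by simp
      have cTn: "card T \<le> n" using card_mono[OF finite_lessThan T(1)] by simp
      have "anf_coeff (bf_mult g f) T \<longleftrightarrow>
          tr (\<lambda>j. of_bool (u j = 1 \<and> f {..<j})) (card T) = 1"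
        by (rule anf_sym[OF T(1)]) (simp add: bf_mult_def g_def sym)
      also have "tr (\<lambda>j. of_bool (u j = 1 \<and> f {..<j})) (card T) = tr w (card T)"
        unfolding tr_def
      proof (rule sum.cong[OF refl])
        fix j assume "j \<in> {..card T}"
        then have "j \<le> n" using cTn by simp
        then have "of_bool (u j = 1 \<and> f {..<j}) = w j"
          unfolding w_def v'_eq[OF \<open>j \<le> n\<close>] vb_def by (cases "u j") simp_all
        then show "of_nat (card T choose j) * of_bool (u j = 1 \<and> f {..<j}) = of_nat (card T choose j) * w j"
          by simp
      qed
      also have "tr w (card T) = 0" by (rule tr_period[of M K "card T" w, OF M_def TM w_per])
      finally show False using T(2) by simp
    qed
  qed
  define dg where "dg = alg_deg n g"
  have dg1: "1 \<le> dg" using deg_g_ge r0 dg_def by simp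
  have sum_le: "dg + alg_deg n (bf_mult g f) \<le> d - 1"
    using deg_g_le deg_gf dg_def r_def rM Md by simp
  have two_le: "2 * dg \<le> d - 1" using deg_g_le dg_def r_def rM Md by simp
  show ?thesis
  proof (cases "dg < alg_immunity n f")
    case True
    have "fast_alg_immunity n f \<le> dg + alg_deg n (bf_mult g f)"
      unfolding fast_alg_immunity_def
      by (rule Least_le) (use True dg1 dg_def in blast)
    then show ?thesis using sum_le d_def by simp
  next
    case False
    have "fast_alg_immunity n f \<le> 2 * alg_immunity n f"
      unfolding fast_alg_immunity_def by (rule Least_le) simp
    then show ?thesis using False two_le d_def by simp
  qed
qed

end
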